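(* Let $\mu$ be a probability measure on $\mathbb{R}$ whose support is not included in $(-\infty,0)$, and write $\mu_n=\mu(\{n\})$ for integers $n\ge0$. Assume $(\mu_n)_{n\ge0}$ is completely monotone, so that $\mu_n=\int_0^1t^n\,\nu(dt)$, $n\ge0$, for a unique finite measure $\nu$ on $[0,1]$, and assume the support of $\nu$ contains a decreasing sequence $(c_n)$ with $\sum_n(-\ln c_n)^{-1}=\infty$. Then the restrictions of $\mu$ and $\mu*\mu$ to $[0,\infty)$ determine whether the support of $\mu$ is included in $\mathbb{Z}$. If the support of $\mu$ is included in $\mathbb{Z}$, then $\mu$ is determined by the restrictions of $\mu$ and $\mu*\mu$ to $[0,\infty)$ (any probability measure $\mu_1$ on $\mathbb{R}$ with $\mu_1=\mu$ and $\mu_1*\mu_1=\mu*\mu$ on $[0,\infty)$ equals $\mu$); in particular $\mu\in\mathscr{C}$.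
   Context: A sequence $(a_k)_{k\ge0}$ of nonnegative reals is completely monotone if $\Delta^na_k\ge0$ for all $k\ge0$, $n\ge1$, where $\Delta^0a=a$ and $\Delta^na_k=\Delta^{n-1}a_k-\Delta^{n-1}a_{k+1}$. $\mathscr{C}$ is the set of probability measures $\mu$ on $\mathbb{R}$ such that every probability measure $\mu_1$ with $\mu_1^{*n}=\mu^{*n}$ on $[0,\infty)$ for all $n\ge1$ ($*n$ = $n$-fold convolution power) equals $\mu$. *)

theory Defs
  imports "HOL-Probability.Probability"
begin

fun fdiff :: "nat \<Rightarrow> (nat \<Rightarrow> real) \<Rightarrow> nat \<Rightarrow> real" where
  "fdiff 0 a k = a k"
| "fdiff (Suc n) a k = fdiff n a k - fdiff n a (Suc k)"

definition completely_monotone :: "(nat \<Rightarrow> real) \<Rightarrow> bool" where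
  "completely_monotone a \<longleftrightarrow> (\<forall>k. a k \<ge> 0) \<and> (\<forall>n\<ge>1. \<forall>k. fdiff n a k \<ge> 0)"

definition msupp :: "real measure \<Rightarrow> real set" where
  "msupp M = {x. \<forall>e>0. emeasure M (ball x e) > 0}"

definition real_prob :: "real measure \<Rightarrow> bool" where
  "real_prob M \<longleftrightarrow> prob_space M \<and> sets M = sets borel"

text \<open>n-fold convolution power (n \<ge> 1).\<close>
fun conv_pow :: "real measure \<Rightarrow> nat \<Rightarrow> real measure" where
  "conv_pow M 0 = M"
| "conv_pow M (Suc 0) = M"
| "conv_pow M (Suc (Suc n)) = convolution M (conv_pow M (Suc n))"

definition eq_on_nonneg :: "real measure \<Rightarrow> real measure \<Rightarrow> bool" where
  "eq_on_nonneg M N \<longleftrightarrow> (\<forall>A\<in>sets borel. A \<subseteq> {0..} \<longrightarrow> emeasure M A = emeasure N A)"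

definition classC :: "real measure set" where
  "classC = {\<mu>. real_prob \<mu> \<and>
     (\<forall>\<mu>1. real_prob \<mu>1 \<and> (\<forall>n\<ge>1. eq_on_nonneg (conv_pow \<mu>1 n) (conv_pow \<mu> n)) \<longrightarrow> \<mu>1 = \<mu>)}"

end

theory Submission
  imports Defs "HOL-Complex_Analysis.Complex_Analysis"
begin


lemma powser_summ_le1:
  fixes d :: "nat \<Rightarrow> real"
  assumes sd: "summable (\<lambda>j. \<bar>d j\<bar>)" and x: "\<bar>x\<bar> \<le> 1"
  shows "summable (\<lambda>j. d j * x^j)"
proof (rule summable_comparison_test'[OF sd, of 0])
  fix n show "norm (d n * x ^ n) \<le> \<bar>d n\<bar>"
    using x by (simp add: abs_mult power_abs mult_left_le power_le_one)
qed

lemma powser_bound_le1: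
  fixes d :: "nat \<Rightarrow> real"
  assumes sd: "summable (\<lambda>j. \<bar>d j\<bar>)" and x: "\<bar>x\<bar> \<le> 1"
  shows "\<bar>\<Sum>j. d j * x^j\<bar> \<le> (\<Sum>j. \<bar>d j\<bar>)"
proof -
  have le: "\<bar>d j * x^j\<bar> \<le> \<bar>d j\<bar>" for j
    using x by (simp add: abs_mult power_abs mult_left_le power_le_one)
  have s: "summable (\<lambda>j. \<bar>d j * x^j\<bar>)" by (rule summable_comparison_test'[OF sd, of 0]) (use le in auto)
  have "\<bar>\<Sum>j. d j * x^j\<bar> \<le> (\<Sum>j. \<bar>d j * x^j\<bar>)" by (rule summable_rabs[OF s])
  also have "\<dots> \<le> (\<Sum>j. \<bar>d j\<bar>)" by (rule suminf_le[OF le s sd])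
  finally show ?thesis .
qed

lemma partial_bound_le1:
  fixes d :: "nat \<Rightarrow> real"
  assumes sd: "summable (\<lambda>j. \<bar>d j\<bar>)" and x: "\<bar>x\<bar> \<le> 1"
  shows "\<bar>\<Sum>j<n. d j * x^j\<bar> \<le> (\<Sum>j. \<bar>d j\<bar>)"
proof -
  have le: "\<bar>d j * x^j\<bar> \<le> \<bar>d j\<bar>" for j
    using x by (simp add: abs_mult power_abs mult_left_le power_le_one)
  have "\<bar>\<Sum>j<n. d j * x^j\<bar> \<le> (\<Sum>j<n. \<bar>d j * x^j\<bar>)" by (rule sum_abs)
  also have "\<dots> \<le> (\<Sum>j<n. \<bar>d j\<bar>)" by (rule sum_mono[OF le])
  also have "\<dots> \<le> (\<Sum>j. \<bar>d j\<bar>)" by (rule sum_le_suminf[OF sd]) auto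
  finally show ?thesis .
qed

definition clamp01 :: "real \<Rightarrow> real" where "clamp01 t = max 0 (min 1 t)"

lemma clamp01_in: "clamp01 t \<in> {0..1}" by (simp add: clamp01_def)
lemma clamp01_id: "t \<in> {0..1} \<Longrightarrow> clamp01 t = t" by (simp add: clamp01_def)
lemma continuous_clamp01: "continuous_on UNIV clamp01"
  unfolding clamp01_def by (intro continuous_intros)

lemma moments_zero_imp:
  fixes \<nu> :: "real measure" and d :: "nat \<Rightarrow> real"
  assumes nu_sets: "sets \<nu> = sets borel"
    and nu_fin: "finite_measure \<nu>"
    and nu_on: "emeasure \<nu> (UNIV - {0..1}) = 0"
    and sd: "summable (\<lambda>j. \<bar>d j\<bar>)"
    and mom: "\<And>m. (\<Sum>j. d j * (\<integral>t. t ^ (m + j) \<partial>\<nu>)) = 0"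
    and x: "x \<in> msupp \<nu>" "0 \<le> x" "x \<le> 1"
  shows "(\<Sum>j. d j * x^j) = 0"
proof -
  interpret finite_measure \<nu> by (rule nu_fin)
  have [measurable_cong]: "sets \<nu> = sets borel" by (rule nu_sets)
  have sp: "space \<nu> = UNIV" using sets_eq_imp_space_eq[OF nu_sets] by simp
  have AE01: "AE t in \<nu>. t \<in> {0..1}"
    by (rule AE_I'[of "UNIV - {0..1}"]) (use nu_on nu_sets in \<open>auto simp: sp\<close>)
  define K where "K = (\<Sum>j. \<bar>d j\<bar>)"
  have K0: "0 \<le> K" unfolding K_def by (rule suminf_nonneg[OF sd]) simp
  define G where "G t = (\<Sum>j. d j * t^j)" for t :: real
  define Gc where "Gc t = G (clamp01 t)" for t
  have Gbound: "\<bar>Gc t\<bar> \<le> K" for t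
    unfolding Gc_def G_def K_def using clamp01_in[of t] by (intro powser_bound_le1[OF sd]) auto
  have contG: "continuous_on {0..1} G"
  proof (rule uniform_limit_theorem)
    show "uniform_limit {0..1} (\<lambda>n t. \<Sum>j<n. d j * t^j) G sequentially"
      unfolding G_def
      by (rule Weierstrass_m_test[OF _ sd]) (auto simp: abs_mult power_abs mult_left_le power_le_one)
  qed (auto intro!: continuous_intros always_eventually)
  have contGc: "continuous_on UNIV Gc"
    unfolding Gc_def
    by (rule continuous_on_compose2[OF contG continuous_clamp01]) (use clamp01_in in auto)
  have Gc_meas[measurable]: "Gc \<in> borel_measurable borel"
    using contGc by (rule borel_measurable_continuous_onI)
  have Gc_eq: "Gc t = G t" if "t \<in> {0..1}" for t using that by (simp add: Gc_def clamp01_id)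
  have powbound: "\<bar>t ^ k * Gc t\<bar> \<le> K" if "t \<in> {0..1}" for t k
  proof -
    have "\<bar>t\<bar> ^ k \<le> 1" using that by (intro power_le_one) auto
    then have "\<bar>t\<bar> ^ k * \<bar>Gc t\<bar> \<le> 1 * K"
      by (intro mult_mono Gbound) auto
    then show ?thesis by (simp add: abs_mult power_abs)
  qed
  have pow_int: "integrable \<nu> (\<lambda>t. t ^ k * Gc t)" for k
  proof (rule integrable_const_bound[where B=K])
    show "AE t in \<nu>. norm (t ^ k * Gc t) \<le> K"
      using AE01 by eventually_elim (use powbound in auto)
  qed simp
  have powk_int: "integrable \<nu> (\<lambda>t. t ^ k)" for k
  proof (rule integrable_const_bound[where B=1])
    show "AE t in \<nu>. norm (t ^ k) \<le> 1"
      using AE01 by eventually_elim (auto simp: power_abs intro: power_le_one)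
  qed simp
  have powk_bd: "\<bar>\<integral>t. t ^ k \<partial>\<nu>\<bar> \<le> measure \<nu> (space \<nu>)" for k
  proof -
    have "\<bar>\<integral>t. t ^ k \<partial>\<nu>\<bar> \<le> (\<integral>t. \<bar>t ^ k\<bar> \<partial>\<nu>)"
      using integral_norm_bound[of \<nu> "\<lambda>t. t ^ k"] by simp
    also have "\<dots> \<le> (\<integral>t. 1 \<partial>\<nu>)"
    proof (rule integral_mono_AE)
      show "AE t in \<nu>. \<bar>t ^ k\<bar> \<le> 1"
        using AE01 by eventually_elim (auto simp: power_abs intro: power_le_one)
    qed (use powk_int in auto)
    finally have "\<bar>\<integral>t. t ^ k \<partial>\<nu>\<bar> \<le> (\<integral>t. 1 \<partial>\<nu>)" .
    then show ?thesis by simp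
  qed
  have mom_Gc: "(\<integral>t. t ^ m * Gc t \<partial>\<nu>) = 0" for m
  proof -
    define s where "s n t = t ^ m * (\<Sum>j<n. d j * t^j)" for n t
    have lim1: "(\<lambda>n. \<integral>t. s n t \<partial>\<nu>) \<longlonglongrightarrow> (\<integral>t. t ^ m * Gc t \<partial>\<nu>)"
    proof (rule integral_dominated_convergence[where w="\<lambda>_. K"])
      show "AE t in \<nu>. (\<lambda>n. s n t) \<longlonglongrightarrow> t ^ m * Gc t"
        using AE01
      proof eventually_elim
        case (elim t)
        then have "(\<lambda>j. d j * t^j) sums G t"
          unfolding G_def using powser_summ_le1[OF sd, of t] by (auto intro!: summable_sums)
        then have "(\<lambda>n. \<Sum>j<n. d j * t^j) \<longlonglongrightarrow> G t" by (simp add: sums_def)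
        then show ?case unfolding s_def using Gc_eq[OF elim] by (auto intro!: tendsto_mult)
      qed
      show "AE t in \<nu>. norm (s n t) \<le> K" for n
        using AE01
      proof eventually_elim
        case (elim t)
        have "\<bar>t\<bar> ^ m \<le> 1" using elim by (intro power_le_one) auto
        moreover have "\<bar>\<Sum>j<n. d j * t^j\<bar> \<le> K" unfolding K_def
          using elim by (intro partial_bound_le1[OF sd]) auto
        ultimately have "\<bar>t\<bar> ^ m * \<bar>\<Sum>j<n. d j * t^j\<bar> \<le> 1 * K"
          by (intro mult_mono) auto
        then show ?case by (simp add: s_def abs_mult power_abs)
      qed
    qed (auto simp: s_def)
    have eq: "(\<integral>t. s n t \<partial>\<nu>) = (\<Sum>j<n. d j * (\<integral>t. t ^ (m + j) \<partial>\<nu>))" for n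
    proof -
      have "(\<integral>t. s n t \<partial>\<nu>) = (\<integral>t. (\<Sum>j<n. d j * t ^ (m + j)) \<partial>\<nu>)"
        unfolding s_def by (simp add: sum_distrib_left power_add ac_simps)
      also have "\<dots> = (\<Sum>j<n. d j * (\<integral>t. t ^ (m + j) \<partial>\<nu>))"
        using powk_int by (simp add: integral_sum)
      finally show ?thesis .
    qed
    have summ: "summable (\<lambda>j. d j * (\<integral>t. t ^ (m + j) \<partial>\<nu>))"
    proof (rule summable_comparison_test'[where g="\<lambda>j. \<bar>d j\<bar> * measure \<nu> (space \<nu>)"])
      show "summable (\<lambda>j. \<bar>d j\<bar> * measure \<nu> (space \<nu>))" using sd by (rule summable_mult2)
      show "norm (d j * (\<integral>t. t ^ (m + j) \<partial>\<nu>)) \<le> \<bar>d j\<bar> * measure \<nu> (space \<nu>)" for j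
        using powk_bd[of "m+j"] by (simp add: abs_mult mult_left_mono)
    qed
    have lim2: "(\<lambda>n. \<integral>t. s n t \<partial>\<nu>) \<longlonglongrightarrow> 0"
      using summable_LIMSEQ[OF summ] mom[of m] by (simp add: eq)
    show ?thesis using LIMSEQ_unique[OF lim1 lim2] .
  qed
  have poly_Gc: "(\<integral>t. q t * Gc t \<partial>\<nu>) = 0" if qpoly: "real_polynomial_function q" for q
  proof -
    obtain a N where q: "q = (\<lambda>t. \<Sum>i\<le>N. a i * t ^ i)"
      using qpoly unfolding real_polynomial_function_iff_sum by blast
    have "(\<integral>t. q t * Gc t \<partial>\<nu>) = (\<integral>t. (\<Sum>i\<le>N. a i * (t ^ i * Gc t)) \<partial>\<nu>)"
      unfolding q sum_distrib_right by (simp only: mult.assoc)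
    also have "\<dots> = (\<Sum>i\<le>N. (\<integral>t. a i * (t ^ i * Gc t) \<partial>\<nu>))"
      by (rule Bochner_Integration.integral_sum[where I="{..N}" and f="\<lambda>i t. a i * (t ^ i * Gc t)"]) (use pow_int in auto)
    also have "\<dots> = (\<Sum>i\<le>N. a i * (\<integral>t. t ^ i * Gc t \<partial>\<nu>))"
      by simp
    also have "\<dots> = 0" using mom_Gc by simp
    finally show ?thesis .
  qed
  have sqb: "(Gc t)^2 \<le> K^2" for t
    using Gbound[of t] K0 abs_le_square_iff[of "Gc t" K] by simp
  have sq_int: "integrable \<nu> (\<lambda>t. (Gc t)^2)"
    by (rule integrable_const_bound[where B="K^2"]) (use sqb in auto)
  have sq_le: "(\<integral>t. (Gc t)^2 \<partial>\<nu>) \<le> e * (K * measure \<nu> (space \<nu>))" if e: "0 < e" for e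
  proof -
    obtain q where q: "real_polynomial_function q" "\<And>t. t \<in> {0..1} \<Longrightarrow> \<bar>Gc t - q t\<bar> < e"
      using Stone_Weierstrass_real_polynomial_function[OF compact_Icc continuous_on_subset[OF contGc subset_UNIV] e]
      by blast
    have qm[measurable]: "q \<in> borel_measurable borel"
      using q(1) by (intro borel_measurable_continuous_onI continuous_on_polymonial_function)
        (simp add: real_polynomial_function_eq)
    have qint: "integrable \<nu> (\<lambda>t. q t * Gc t)"
    proof (rule integrable_const_bound[where B="(K + e) * K"])
      show "AE t in \<nu>. norm (q t * Gc t) \<le> (K + e) * K"
        using AE01
      proof eventually_elim
        case (elim t)
        have "\<bar>q t\<bar> \<le> K + e" using q(2)[OF elim] Gbound[of t] by linarith
        then show ?case using Gbound[of t] K0 by (auto simp: abs_mult intro!: mult_mono)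
      qed
    qed simp
    have "(\<integral>t. (Gc t)^2 \<partial>\<nu>) = (\<integral>t. (Gc t)^2 \<partial>\<nu>) - (\<integral>t. q t * Gc t \<partial>\<nu>)"
      using poly_Gc[OF q(1)] by simp
    also have "\<dots> = (\<integral>t. (Gc t - q t) * Gc t \<partial>\<nu>)"
      using sq_int qint by (simp add: power2_eq_square left_diff_distrib)
    also have "\<dots> \<le> (\<integral>t. e * K \<partial>\<nu>)"
    proof (rule integral_mono_AE)
      show "integrable \<nu> (\<lambda>t. (Gc t - q t) * Gc t)"
        using sq_int qint by (simp add: power2_eq_square left_diff_distrib)
      show "AE t in \<nu>. (Gc t - q t) * Gc t \<le> e * K"
        using AE01
      proof eventually_elim
        case (elim t)
        have "(Gc t - q t) * Gc t \<le> \<bar>Gc t - q t\<bar> * \<bar>Gc t\<bar>" by (simp add: abs_mult[symmetric])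
        also have "\<dots> \<le> e * K" using q(2)[OF elim] Gbound[of t] by (intro mult_mono) auto
        finally show ?case .
      qed
    qed simp
    also have "\<dots> = e * (K * measure \<nu> (space \<nu>))" by simp
    finally show ?thesis .
  qed
  have sq0: "(\<integral>t. (Gc t)^2 \<partial>\<nu>) \<le> 0"
  proof (rule field_le_epsilon)
    fix e :: real assume e: "0 < e"
    define C where "C = K * measure \<nu> (space \<nu>) + 1"
    have "0 \<le> K * measure \<nu> (space \<nu>)" using K0 by simp
    then have C: "0 < C" by (simp add: C_def)
    have "(\<integral>t. (Gc t)^2 \<partial>\<nu>) \<le> (e / C) * (K * measure \<nu> (space \<nu>))"
      using sq_le[of "e / C"] e C by simp
    also have "\<dots> \<le> e" using e C K0 by (simp add: C_def field_simps)
    finally show "(\<integral>t. (Gc t)^2 \<partial>\<nu>) \<le> 0 + e" by simp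
  qed
  show ?thesis
  proof (rule ccontr)
    assume ne: "(\<Sum>j. d j * x^j) \<noteq> 0"
    then have gx: "Gc x \<noteq> 0" using Gc_eq[of x] x by (simp add: G_def)
    define a where "a = (Gc x)^2"
    have a: "0 < a" using gx by (simp add: a_def)
    have "continuous (at x) (\<lambda>t. (Gc t)^2)"
      using contGc by (auto intro!: continuous_intros simp: continuous_on_eq_continuous_at)
    then obtain r where r: "0 < r" "\<And>t. dist t x < r \<Longrightarrow> dist ((Gc t)^2) a < a / 2"
      using a unfolding continuous_at_eps_delta a_def by (metis half_gt_zero)
    have big: "a / 2 * indicator (ball x r) t \<le> (Gc t)^2" for t
    proof (cases "t \<in> ball x r")
      case True
      then have "\<bar>a - (Gc t)^2\<bar> < a / 2" using r(2)[of t] by (simp add: dist_commute dist_real_def)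
      then have "a / 2 < (Gc t)^2" by arith
      then show ?thesis using True by simp
    next
      case False
      then show ?thesis by simp
    qed
    have pos: "0 < emeasure \<nu> (ball x r)" using x(1) r(1) by (auto simp: msupp_def)
    have "a / 2 * measure \<nu> (ball x r) = (\<integral>t. a / 2 * indicator (ball x r) t \<partial>\<nu>)"
      by simp
    also have "\<dots> \<le> (\<integral>t. (Gc t)^2 \<partial>\<nu>)"
      by (rule integral_mono[OF _ sq_int big]) (intro integrable_mult_right integrable_real_indicator, auto simp: nu_sets emeasure_eq_measure)
    finally have "a / 2 * measure \<nu> (ball x r) \<le> 0" using sq0 by linarith
    moreover have "0 < measure \<nu> (ball x r)"
      using pos by (simp add: emeasure_eq_measure)
    ultimately show False using a by (simp add: mult_le_0_iff)
  qed
qed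


lemma coeffs_zero:
  fixes d :: "nat \<Rightarrow> real"
  assumes sd: "summable (\<lambda>j. \<bar>d j\<bar>)" and e: "0 < e"
    and z: "\<And>x. 0 < x \<Longrightarrow> x < e \<Longrightarrow> (\<Sum>j. d j * x^j) = 0"
  shows "d k = 0"
proof (induction k rule: less_induct)
  case (less k)
  define h where "h x = (\<Sum>j. d (j+k) * x^j)" for x :: real
  have "summable d" using sd summable_rabs_cancel by blast
  then have sk: "summable (\<lambda>j. d (j+k) * 1^j)"
    using summable_ignore_initial_segment by simp
  have cont: "isCont h 0" unfolding h_def by (rule isCont_powser[OF sk]) simp
  have hx: "h x = 0" if "0<x" "x<min e 1" for x
  proof -
    have s1: "summable (\<lambda>j. d j * x^j)" using powser_summ_le1[OF sd] that by simp
    then have "(\<lambda>j. d j * x^j) sums 0" using z[of x] that by (metis min_less_iff_conj summable_sums)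
    then have "(\<lambda>j. d (j+k) * x^(j+k)) sums 0"
      using sums_zero_iff_shift[of k "\<lambda>j. d j * x^j"] less.IH by simp
    then have "(\<lambda>j. x^k * (d (j+k) * x^j)) sums (x^k * 0)" by (simp add: power_add ac_simps)
    then have "(\<lambda>j. d (j+k) * x^j) sums 0" using sums_mult_iff[of "x^k" "\<lambda>j. d (j+k) * x^j" 0] that by simp
    then show ?thesis by (simp add: h_def sums_iff)
  qed
  have "(h \<longlongrightarrow> h 0) (at_right 0)"
    using cont by (simp add: isCont_def filterlim_at_split)
  moreover have "eventually (\<lambda>x. h x = 0) (at_right 0)"
    unfolding eventually_at_right_field using e hx by (intro exI[of _ "min e 1"]) auto
  then have "(h \<longlongrightarrow> 0) (at_right 0)" by (simp add: tendsto_eventually)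
  ultimately have "h 0 = 0" using tendsto_unique trivial_limit_at_right_real by blast
  then show ?case by (simp add: h_def)
qed

lemma powser_zero_on_01:
  fixes d :: "nat \<Rightarrow> real" and c :: "nat \<Rightarrow> real"
  assumes sd: "summable (\<lambda>j. \<bar>d j\<bar>)"
    and c_dec: "strict_mono_on UNIV (\<lambda>n. - c n)"
    and c_pos: "\<And>n. 0 < c n" and c_lt1: "\<And>n. c n < 1"
    and zc: "\<And>n. (\<Sum>j. d j * c n ^ j) = 0"
    and x: "0 < x" "x < 1"
  shows "(\<Sum>j. d j * x ^ j) = 0"
proof -
  have dec: "c (Suc n) < c n" for n using c_dec by (auto simp: strict_mono_on_def)
  then have "decseq c" by (simp add: decseq_SucI less_imp_le)
  then obtain L where L: "c \<longlonglongrightarrow> L" "\<forall>i. L \<le> c i"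
    using decseq_convergent[of c 0] c_pos less_imp_le by metis
  have Lc: "L < c n" for n using L(2)[rule_format, of "Suc n"] dec[of n] by linarith
  have L01: "0 \<le> L" "L < 1" using Lc[of 0] c_lt1[of 0] LIMSEQ_le_const[OF L(1), of 0] c_pos less_imp_le
    by auto
  define F where "F z = (\<Sum>j. complex_of_real (d j) * z^j)" for z
  have summ: "summable (\<lambda>j. complex_of_real (d j) * z^j)" if "norm z \<le> 1" for z
  proof (rule summable_comparison_test'[OF sd, of 0])
    fix n show "norm (complex_of_real (d n) * z ^ n) \<le> \<bar>d n\<bar>"
      using that by (simp add: norm_mult norm_power mult_left_le power_le_one)
  qed
  have hol: "F holomorphic_on ball 0 1"
  proof (rule power_series_holomorphic[where a = "\<lambda>j. complex_of_real (d j)"])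
    fix w :: complex assume "w \<in> ball 0 1"
    then have "norm w \<le> 1" by simp
    then show "(\<lambda>n. complex_of_real (d n) * (w - 0) ^ n) sums F w"
      using summ[of w] by (simp add: F_def summable_sums)
  qed
  have Freal: "F (complex_of_real t) = complex_of_real (\<Sum>j. d j * t^j)" if "\<bar>t\<bar> \<le> 1" for t
  proof -
    have "(\<lambda>j. d j * t^j) sums (\<Sum>j. d j * t^j)" using powser_summ_le1[OF sd that] summable_sums by blast
    then have "(\<lambda>j. complex_of_real (d j * t^j)) sums complex_of_real (\<Sum>j. d j * t^j)"
      by (subst sums_of_real_iff)
    then show ?thesis by (simp add: F_def sums_iff)
  qed
  let ?U = "complex_of_real ` range c"
  have U0: "F z = 0" if "z \<in> ?U" for z
    using that Freal zc c_pos c_lt1 by (auto simp: less_imp_le abs_of_pos)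
  have lim: "complex_of_real L islimpt ?U"
  proof (unfold islimpt_approachable, intro allI impI)
    fix e :: real assume "0 < e"
    then obtain n where "dist (c n) L < e" using L(1) by (auto simp: lim_sequentially)
    then have "dist (complex_of_real (c n)) (complex_of_real L) < e" "complex_of_real (c n) \<noteq> complex_of_real L"
      using Lc[of n] by (auto simp: dist_complex_def dist_real_def simp flip: of_real_diff)
    then show "\<exists>x'\<in>?U. x' \<noteq> complex_of_real L \<and> dist x' (complex_of_real L) < e" by blast
  qed
  have "F (complex_of_real x) = 0"
  proof (rule analytic_continuation[OF hol open_ball connected_ball _ _ lim])
    show "?U \<subseteq> ball 0 1" using c_pos c_lt1 by (auto simp: abs_of_pos)
    show "complex_of_real L \<in> ball 0 1" using L01 by auto
    show "complex_of_real x \<in> ball 0 1" using x by auto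
  qed (use U0 in auto)
  then show ?thesis using Freal[of x] x by simp
qed



lemma nonneg_transfer:
  assumes sM: "sets M = sets borel" and sN: "sets N = sets borel" and eq: "eq_on_nonneg M N"
    and f: "f \<in> borel_measurable borel"
  shows "(\<integral>\<^sup>+x. f x * indicator {0..} x \<partial>M) = (\<integral>\<^sup>+x. f x * indicator {0..} x \<partial>N)"
proof -
  have dens: "density M (indicator {0..}) = density N (indicator {0..})"
  proof (rule measure_eqI)
    show "sets (density M (indicator {0..})) = sets (density N (indicator {0..}))"
      using sM sN by simp
    fix A assume "A \<in> sets (density M (indicator {0..}))"
    then have A: "A \<in> sets borel" using sM by simp
    have "emeasure (density M (indicator {0..})) A = emeasure M ({0..} \<inter> A)"
      using A sM by (intro emeasure_restricted) auto
    also have "\<dots> = emeasure N ({0..} \<inter> A)"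
      using eq A unfolding eq_on_nonneg_def by auto
    also have "\<dots> = emeasure (density N (indicator {0..})) A"
      using A sN by (intro emeasure_restricted[symmetric]) auto
    finally show "emeasure (density M (indicator {0..})) A = emeasure (density N (indicator {0..})) A" .
  qed
  have fM: "f \<in> borel_measurable M" "f \<in> borel_measurable N"
    unfolding measurable_cong_sets[OF sM refl] measurable_cong_sets[OF sN refl] by (rule f)+
  have ib: "(indicator {0..} :: real \<Rightarrow> ennreal) \<in> borel_measurable borel" by simp
  have iM: "(indicator {0..} :: real \<Rightarrow> ennreal) \<in> borel_measurable M" "(indicator {0..} :: real \<Rightarrow> ennreal) \<in> borel_measurable N"
    unfolding measurable_cong_sets[OF sM refl] measurable_cong_sets[OF sN refl] by (rule ib)+
  have "integral\<^sup>N (density M (indicator {0..})) f = (\<integral>\<^sup>+x. indicator {0..} x * f x \<partial>M)"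
    by (rule nn_integral_density[OF iM(1) fM(1)])
  also have "\<dots> = (\<integral>\<^sup>+x. f x * indicator {0..} x \<partial>M)"
    by (intro nn_integral_cong) (simp add: mult.commute)
  finally have 1: "integral\<^sup>N (density M (indicator {0..})) f = (\<integral>\<^sup>+x. f x * indicator {0..} x \<partial>M)" .
  have "integral\<^sup>N (density N (indicator {0..})) f = (\<integral>\<^sup>+x. indicator {0..} x * f x \<partial>N)"
    by (rule nn_integral_density[OF iM(2) fM(2)])
  also have "\<dots> = (\<integral>\<^sup>+x. f x * indicator {0..} x \<partial>N)"
    by (intro nn_integral_cong) (simp add: mult.commute)
  finally have 2: "integral\<^sup>N (density N (indicator {0..})) f = (\<integral>\<^sup>+x. f x * indicator {0..} x \<partial>N)" .
  show ?thesis by (simp only: 1[symmetric] 2[symmetric] dens)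
qed

lemma supp_AE:
  assumes "real_prob M"
  shows "AE x in M. x \<in> msupp M"
proof -
  have sM: "sets M = sets borel" using assms by (simp add: real_prob_def)
  define F where "F = {S. \<exists>x e. S = ball x e \<and> 0 < e \<and> emeasure M (ball x e) = 0}"
  have "\<And>S. S \<in> F \<Longrightarrow> open S" unfolding F_def by blast
  then obtain F' where F': "F' \<subseteq> F" "countable F'" "\<Union>F' = \<Union>F" by (rule Lindelof)
  have null: "\<Union>F' \<in> null_sets M"
  proof -
    have "(\<Union>S\<in>F'. S) \<in> null_sets M"
    proof (rule null_sets_UN'[OF F'(2)])
      fix S assume "S \<in> F'"
      then have "S \<in> F" using F'(1) by blast
      then obtain x e where S: "S = ball x e" "emeasure M (ball x e) = 0" unfolding F_def by blast
      have "ball x e \<in> sets M" using sM by simp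
      then show "S \<in> null_sets M" using S by (simp add: null_sets_def)
    qed
    then show ?thesis by simp
  qed
  have sub: "{x \<in> space M. \<not> x \<in> msupp M} \<subseteq> \<Union>F'"
  proof
    fix x assume "x \<in> {x \<in> space M. \<not> x \<in> msupp M}"
    then have "\<not> (\<forall>e>0. emeasure M (ball x e) > 0)" unfolding msupp_def by blast
    then obtain e where e: "0 < e" "\<not> emeasure M (ball x e) > 0" by blast
    then have "emeasure M (ball x e) = 0" by (simp add: not_gr_zero)
    then have "ball x e \<in> F" using e(1) unfolding F_def by blast
    moreover have "x \<in> ball x e" using e(1) by simp
    ultimately have "x \<in> \<Union>F" by blast
    then show "x \<in> \<Union>F'" using F'(3) by simp
  qed
  show ?thesis by (rule AE_I'[OF null sub])
qed

lemma decomp: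
  assumes mu: "real_prob \<mu>" and AEZ: "AE x in \<mu>. x \<in> \<int>"
    and M: "real_prob M" and eq: "eq_on_nonneg M \<mu>"
    and f: "f \<in> borel_measurable borel"
  shows "(\<integral>\<^sup>+x. f x \<partial>M) = (\<Sum>n. ennreal (measure \<mu> {real n}) * f (real n))
           + (\<integral>\<^sup>+x. f x * indicator {..<0} x \<partial>M)"
proof -
  have smu: "sets \<mu> = sets borel" and sM: "sets M = sets borel"
    using mu M by (auto simp: real_prob_def)
  interpret mu: prob_space \<mu> using mu by (simp add: real_prob_def)
  have fM[measurable]: "f \<in> borel_measurable M"
    unfolding measurable_cong_sets[OF sM refl] by (rule f)
  have "(\<integral>\<^sup>+x. f x \<partial>M) = (\<integral>\<^sup>+x. f x * indicator {0..} x + f x * indicator {..<0} x \<partial>M)"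
    by (intro nn_integral_cong) (auto simp: indicator_def)
  also have "\<dots> = (\<integral>\<^sup>+x. f x * indicator {0..} x \<partial>M) + (\<integral>\<^sup>+x. f x * indicator {..<0} x \<partial>M)"
    by (rule nn_integral_add) (use sM in auto)
  also have "(\<integral>\<^sup>+x. f x * indicator {0..} x \<partial>M) = (\<integral>\<^sup>+x. f x * indicator {0..} x \<partial>\<mu>)"
    by (rule nonneg_transfer[OF sM smu eq f])
  also have "\<dots> = (\<integral>\<^sup>+x. (\<Sum>n. f (real n) * indicator {real n} x) \<partial>\<mu>)"
  proof (rule nn_integral_cong_AE)
    show "AE x in \<mu>. f x * indicator {0..} x = (\<Sum>n. f (real n) * indicator {real n} x)"
      using AEZ
    proof eventually_elim
      case (elim x)
      show ?case
      proof (cases "x < 0")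
        case True
        then show ?thesis by (simp add: indicator_def)
      next
        case False
        from elim obtain z :: int where xz: "x = of_int z" by (auto elim: Ints_cases)
        with False have "0 \<le> z" by simp
        then have "x = real (nat z)" using xz by simp
        then obtain k :: nat where xk: "x = real k" by blast
        have "(\<Sum>n. f (real n) * indicator {real n} x) = (\<Sum>n. if n = k then f (real k) else 0)"
          by (intro suminf_cong) (auto simp: xk indicator_def)
        also have "\<dots> = f (real k)" using sums_unique[OF sums_single[of k "\<lambda>_. f (real k)"]] by simp
        finally show ?thesis using xk by simp
      qed
    qed
  qed
  also have "\<dots> = (\<Sum>n. \<integral>\<^sup>+x. f (real n) * indicator {real n} x \<partial>\<mu>)"
    by (rule nn_integral_suminf) (use smu in auto)
  also have "\<dots> = (\<Sum>n. ennreal (measure \<mu> {real n}) * f (real n))"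
    using smu by (subst nn_integral_cmult_indicator) (auto simp: mu.emeasure_eq_measure mult.commute)
  finally show ?thesis .
qed

lemma conv_formula:
  assumes mu: "real_prob \<mu>" and AEZ: "AE x in \<mu>. x \<in> \<int>"
    and M: "real_prob M" and eq: "eq_on_nonneg M \<mu>"
    and B: "B \<in> sets borel" and B0: "B \<subseteq> {0..}"
  shows "emeasure (M \<star> M) B =
     (\<Sum>k. ennreal (measure \<mu> {real k}) * (\<Sum>n. ennreal (measure \<mu> {real n}) * indicator B (real k + real n)))
     + (\<integral>\<^sup>+y. (\<Sum>k. ennreal (measure \<mu> {real k}) * indicator B (y + real k)) * indicator {..<0} y \<partial>M)
     + (\<integral>\<^sup>+y. (\<Sum>k. ennreal (measure \<mu> {real k}) * indicator B (y + real k)) * indicator {..<0} y \<partial>M)"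
proof -
  let ?p = "\<lambda>n. ennreal (measure \<mu> {real n})"
  have smu: "sets \<mu> = sets borel" and sM: "sets M = sets borel"
    using mu M by (auto simp: real_prob_def)
  interpret M: prob_space M using M by (simp add: real_prob_def)
  have [measurable]: "B \<in> sets borel" by (rule B)
  define a where "a x = (\<Sum>n. ?p n * indicator B (x + real n))" for x
  define b where "b x = (\<integral>\<^sup>+y. indicator B (x + y) * indicator {..<0} y \<partial>M)" for x
  define T where "T = (\<integral>\<^sup>+y. (\<Sum>k. ?p k * indicator B (y + real k)) * indicator {..<0} y \<partial>M)"
  have ab: "(\<integral>\<^sup>+y. indicator B (x + y) \<partial>M) = a x + b x" for x
    unfolding a_def b_def by (rule decomp[OF mu AEZ M eq]) simp
  have a_b: "a \<in> borel_measurable borel" unfolding a_def by measurable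
  have pb: "(\<lambda>(x, y). indicator B (x + y) * indicator {..<0} y :: ennreal) \<in> borel_measurable (borel \<Otimes>\<^sub>M borel)"
    by measurable
  have pM: "(\<lambda>(x, y). indicator B (x + y) * indicator {..<0} y :: ennreal) \<in> borel_measurable (borel \<Otimes>\<^sub>M M)"
    using pb by (simp add: measurable_cong_sets[OF sets_pair_measure_cong[OF refl sM] refl])
  have b_b: "b \<in> borel_measurable borel" unfolding b_def
    using M.borel_measurable_nn_integral[OF pM] by simp
  have a_M: "a \<in> borel_measurable M" and b_M: "b \<in> borel_measurable M"
    unfolding measurable_cong_sets[OF sM refl] by (rule a_b b_b)+
  have "emeasure (M \<star> M) B = (\<integral>\<^sup>+x. \<integral>\<^sup>+y. indicator B (x + y) \<partial>M \<partial>M)"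
    using B sM by (intro convolution_emeasure') (auto intro: M.finite_measure)
  also have "\<dots> = (\<integral>\<^sup>+x. a x + b x \<partial>M)" by (simp add: ab)
  also have "\<dots> = (\<integral>\<^sup>+x. a x \<partial>M) + (\<integral>\<^sup>+x. b x \<partial>M)"
    by (rule nn_integral_add[OF a_M b_M])
  also have "(\<integral>\<^sup>+x. a x \<partial>M) = (\<Sum>k. ?p k * a (real k)) + T"
    unfolding T_def by (subst decomp[OF mu AEZ M eq a_b]) (simp add: a_def)
  also have "(\<integral>\<^sup>+x. b x \<partial>M) = (\<Sum>k. ?p k * b (real k)) + (\<integral>\<^sup>+x. b x * indicator {..<0} x \<partial>M)"
    by (rule decomp[OF mu AEZ M eq b_b])
  also have "(\<integral>\<^sup>+x. b x * indicator {..<0} x \<partial>M) = 0"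
  proof -
    have "b x * indicator {..<0} x = 0" for x
    proof (cases "x < 0")
      case True
      have "b x = (\<integral>\<^sup>+y. 0 \<partial>M)" unfolding b_def
        by (intro nn_integral_cong) (use True B0 in \<open>auto simp: indicator_def\<close>)
      then show ?thesis by simp
    qed simp
    then have "(\<lambda>x. b x * indicator {..<0} x) = (\<lambda>x. 0)" by (intro ext)
    then show ?thesis by (simp only:) simp
  qed
  also have "(\<Sum>k. ?p k * b (real k)) = T"
  proof -
    have m: "(\<lambda>y. ?p k * indicator B (y + real k) * indicator {..<0} y) \<in> borel_measurable M" for k
      unfolding measurable_cong_sets[OF sM refl] by measurable
    have "(\<Sum>k. ?p k * b (real k)) = (\<Sum>k. \<integral>\<^sup>+y. ?p k * indicator B (y + real k) * indicator {..<0} y \<partial>M)"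
    proof (intro suminf_cong)
      fix k
      have "?p k * b (real k) = ?p k * (\<integral>\<^sup>+y. indicator B (y + real k) * indicator {..<0} y \<partial>M)"
        unfolding b_def by (simp add: add.commute)
      also have "\<dots> = (\<integral>\<^sup>+y. ?p k * (indicator B (y + real k) * indicator {..<0} y) \<partial>M)"
        by (rule nn_integral_cmult[symmetric]) (unfold measurable_cong_sets[OF sM refl], measurable)
      finally show "?p k * b (real k) = (\<integral>\<^sup>+y. ?p k * indicator B (y + real k) * indicator {..<0} y \<partial>M)"
        by (simp add: mult.assoc)
    qed
    also have "\<dots> = (\<integral>\<^sup>+y. (\<Sum>k. ?p k * indicator B (y + real k) * indicator {..<0} y) \<partial>M)"
      by (rule nn_integral_suminf[symmetric]) (rule m)
    also have "\<dots> = T" unfolding T_def by (simp add: ennreal_suminf_multc)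
    finally show ?thesis .
  qed
  finally show ?thesis unfolding a_def T_def by (simp add: add.assoc)
qed



lemma p_summable:
  assumes "real_prob M"
  shows "summable (\<lambda>n. measure M {real n})"
proof -
  interpret prob_space M using assms by (simp add: real_prob_def)
  have sM: "sets M = sets borel" using assms by (simp add: real_prob_def)
  have r: "range (\<lambda>n. {real n}) \<subseteq> sets M" unfolding sM by (intro image_subsetI borel_closed) simp
  have d: "disjoint_family (\<lambda>n. {real n})" unfolding disjoint_family_on_def by simp
  show ?thesis using sums_summable[OF finite_measure_UNION[OF r d]] .
qed

lemma T_eval:
  assumes M: "real_prob M" and B: "B \<in> sets borel"
    and q0: "\<And>k. 0 \<le> q k" and qs: "summable q"
  shows "(\<integral>\<^sup>+y. (\<Sum>k. ennreal (q k) * indicator B (y + real k)) * indicator {..<0} y \<partial>M)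
       = ennreal (\<Sum>k. q k * measure M ((\<lambda>y. y + real k) -` B \<inter> {..<0}))"
proof -
  interpret prob_space M using M by (simp add: real_prob_def)
  have sM: "sets M = sets borel" using M by (simp add: real_prob_def)
  have [measurable]: "B \<in> sets borel" by (rule B)
  let ?G = "\<lambda>k. (\<lambda>y. y + real k) -` B \<inter> {..<0::real}"
  have Gs: "?G k \<in> sets M" for k
  proof -
    have "(\<lambda>y. y + real k) -` B \<in> sets borel"
      by (rule measurable_sets_borel[OF _ B]) measurable
    then show ?thesis using sM by auto
  qed
  have "(\<integral>\<^sup>+y. (\<Sum>k. ennreal (q k) * indicator B (y + real k)) * indicator {..<0} y \<partial>M)
      = (\<integral>\<^sup>+y. (\<Sum>k. ennreal (q k) * indicator (?G k) y) \<partial>M)"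
  proof (intro nn_integral_cong)
    fix y :: real
    have "(\<Sum>k. ennreal (q k) * indicator B (y + real k)) * indicator {..<0} y
        = (\<Sum>k. ennreal (q k) * indicator B (y + real k) * indicator {..<0} y)"
      by (simp only: ennreal_suminf_multc)
    also have "\<dots> = (\<Sum>k. ennreal (q k) * indicator (?G k) y)"
      by (intro suminf_cong) (simp only: indicator_inter_arith indicator_vimage mult.assoc)
    finally show "(\<Sum>k. ennreal (q k) * indicator B (y + real k)) * indicator {..<0} y
        = (\<Sum>k. ennreal (q k) * indicator (?G k) y)" .
  qed
  also have "\<dots> = (\<Sum>k. \<integral>\<^sup>+y. ennreal (q k) * indicator (?G k) y \<partial>M)"
    by (rule nn_integral_suminf) (use Gs in auto)
  also have "\<dots> = (\<Sum>k. ennreal (q k * measure M (?G k)))"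
  proof (intro suminf_cong)
    fix k
    have "(\<integral>\<^sup>+y. ennreal (q k) * indicator (?G k) y \<partial>M) = ennreal (q k) * emeasure M (?G k)"
      by (rule nn_integral_cmult_indicator[OF Gs])
    also have "\<dots> = ennreal (q k) * ennreal (measure M (?G k))" by (simp add: emeasure_eq_measure)
    also have "\<dots> = ennreal (q k * measure M (?G k))" using q0[of k] by (simp add: ennreal_mult)
    finally show "(\<integral>\<^sup>+y. ennreal (q k) * indicator (?G k) y \<partial>M) = ennreal (q k * measure M (?G k))" .
  qed
  also have "\<dots> = ennreal (\<Sum>k. q k * measure M (?G k))"
  proof (rule suminf_ennreal2)
    show "0 \<le> q k * measure M (?G k)" for k using q0 by simp
    show "summable (\<lambda>k. q k * measure M (?G k))"
    proof (rule summable_comparison_test'[OF qs, of 0])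
      fix k
      have "measure M (?G k) \<le> 1" by simp
      then show "norm (q k * measure M (?G k)) \<le> q k"
        using q0[of k] by (simp add: mult_left_le)
    qed
  qed
  finally show ?thesis .
qed

lemma R_summable:
  assumes M: "real_prob M" and q0: "\<And>k. 0 \<le> q k" and qs: "summable q"
  shows "summable (\<lambda>k. q k * measure M (G k))"
proof (rule summable_comparison_test'[OF qs, of 0])
  interpret prob_space M using M by (simp add: real_prob_def)
  fix k
  have "measure M (G k) \<le> 1" by simp
  then show "norm (q k * measure M (G k)) \<le> q k"
    using q0[of k] by (simp add: mult_left_le)
qed

lemma series_eq:
  assumes mu: "real_prob \<mu>" and AEZ: "AE x in \<mu>. x \<in> \<int>"
    and mu1: "real_prob \<mu>1" and eq1: "eq_on_nonneg \<mu>1 \<mu>"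
    and eqc: "eq_on_nonneg (\<mu>1 \<star> \<mu>1) (\<mu> \<star> \<mu>)"
    and A: "A \<in> sets borel" and A01: "A \<subseteq> {0..<1}"
  shows "(\<Sum>j. measure \<mu> {real (j + m)} * (measure \<mu>1 ((\<lambda>y. y + real j) -` A \<inter> {..<0})
            - measure \<mu> ((\<lambda>y. y + real j) -` A \<inter> {..<0}))) = 0"
proof -
  let ?p = "\<lambda>n. measure \<mu> {real n}"
  have p0: "\<And>n. 0 \<le> ?p n" by simp
  have ps: "summable ?p" by (rule p_summable[OF mu])
  define B where "B = (\<lambda>x. x - real m) -` A"
  have Bb: "B \<in> sets borel" unfolding B_def by (rule measurable_sets_borel[OF _ A]) measurable
  have B0: "B \<subseteq> {0..}"
  proof
    fix x assume "x \<in> B"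
    then have "x - real m \<in> A" by (simp add: B_def)
    then have "0 \<le> x - real m" using A01 by auto
    then show "x \<in> {0..}" by simp
  qed
  have eqmu: "eq_on_nonneg \<mu> \<mu>" by (simp add: eq_on_nonneg_def)
  define S0 where "S0 = (\<Sum>k. ennreal (?p k) * (\<Sum>n. ennreal (?p n) * indicator B (real k + real n)))"
  define G where "G k = (\<lambda>y. y + real k) -` B \<inter> {..<0}" for k
  define R where "R M = (\<Sum>k. ?p k * measure M (G k))" for M
  have c1: "emeasure (\<mu>1 \<star> \<mu>1) B = S0 + ennreal (R \<mu>1) + ennreal (R \<mu>1)"
    using conv_formula[OF mu AEZ mu1 eq1 Bb B0] T_eval[OF mu1 Bb p0 ps]
    unfolding S0_def R_def G_def by simp
  have c2: "emeasure (\<mu> \<star> \<mu>) B = S0 + ennreal (R \<mu>) + ennreal (R \<mu>)"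
    using conv_formula[OF mu AEZ mu eqmu Bb B0] T_eval[OF mu Bb p0 ps]
    unfolding S0_def R_def G_def by simp
  have eqB: "emeasure (\<mu>1 \<star> \<mu>1) B = emeasure (\<mu> \<star> \<mu>) B"
    using eqc Bb B0 unfolding eq_on_nonneg_def by blast
  interpret mu: prob_space \<mu> using mu by (simp add: real_prob_def)
  have smu: "sets \<mu> = sets borel" using mu by (simp add: real_prob_def)
  interpret cc: finite_measure "\<mu> \<star> \<mu>"
    by (rule convolution_finite) (use smu mu.finite_measure in auto)
  have "emeasure (\<mu> \<star> \<mu>) B \<noteq> \<infinity>" using cc.emeasure_finite[of B] by simp
  then have S0fin: "S0 \<noteq> \<infinity>" using c2 by (auto simp: top_add)
  have "S0 + (ennreal (R \<mu>1) + ennreal (R \<mu>1)) = emeasure (\<mu>1 \<star> \<mu>1) B"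
    using c1 by (simp only: add.assoc)
  also have "\<dots> = emeasure (\<mu> \<star> \<mu>) B" by (rule eqB)
  also have "\<dots> = S0 + (ennreal (R \<mu>) + ennreal (R \<mu>))" using c2 by (simp only: add.assoc)
  finally have "S0 + (ennreal (R \<mu>1) + ennreal (R \<mu>1)) = S0 + (ennreal (R \<mu>) + ennreal (R \<mu>))" .
  then have "ennreal (R \<mu>1) + ennreal (R \<mu>1) = ennreal (R \<mu>) + ennreal (R \<mu>)"
    using S0fin ennreal_add_left_cancel by blast
  moreover have R0: "0 \<le> R M" if "real_prob M" for M
    unfolding R_def by (rule suminf_nonneg[OF R_summable[OF that p0 ps]]) simp
  ultimately have "ennreal (R \<mu>1 + R \<mu>1) = ennreal (R \<mu> + R \<mu>)"
    using R0[OF mu1] R0[OF mu] by (simp add: ennreal_plus[symmetric] del: ennreal_plus)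
  then have "R \<mu>1 + R \<mu>1 = R \<mu> + R \<mu>"
    using R0[OF mu1] R0[OF mu] by (subst (asm) ennreal_inj) auto
  then have Req: "R \<mu>1 - R \<mu> = 0" by simp
  define f where "f k = ?p k * (measure \<mu>1 (G k) - measure \<mu> (G k))" for k
  have fs: "summable f"
    unfolding f_def right_diff_distrib
    by (intro summable_diff R_summable[OF mu1 p0 ps] R_summable[OF mu p0 ps])
  have fsum: "(\<Sum>k. f k) = 0"
    using Req suminf_diff[OF R_summable[OF mu1 p0 ps] R_summable[OF mu p0 ps]]
    unfolding R_def f_def right_diff_distrib by simp
  have Gempty: "G k = {}" if "k < m" for k
  proof -
    have "y \<notin> G k" for y
    proof
      assume "y \<in> G k"
      then have "y + real k - real m \<in> A" "y < 0" by (auto simp: G_def B_def)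
      then have "0 \<le> y + real k - real m" using A01 by auto
      moreover have "real k < real m" using that by simp
      ultimately show False using \<open>y < 0\<close> by linarith
    qed
    then show ?thesis by blast
  qed
  have f0: "f k = 0" if "k < m" for k using Gempty[OF that] by (simp add: f_def)
  have "(\<Sum>j. f (j + m)) = (\<Sum>k. f k) - (\<Sum>k<m. f k)" by (rule suminf_minus_initial_segment[OF fs])
  also have "\<dots> = 0" using fsum f0 by simp
  finally have "(\<Sum>j. f (j + m)) = 0" .
  moreover have "f (j + m) = measure \<mu> {real (j + m)} * (measure \<mu>1 ((\<lambda>y. y + real j) -` A \<inter> {..<0})
            - measure \<mu> ((\<lambda>y. y + real j) -` A \<inter> {..<0}))" for j
  proof -
    have "G (j + m) = (\<lambda>y. y + real j) -` A \<inter> {..<0}"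
      by (auto simp: G_def B_def algebra_simps)
    then show ?thesis by (simp add: f_def)
  qed
  ultimately show ?thesis by simp
qed



lemma shift_disjoint:
  assumes "\<And>j. A j \<subseteq> {0..<1::real}"
  shows "disjoint_family (\<lambda>j. (\<lambda>y. y + real j) -` A j \<inter> {..<0})"
proof (unfold disjoint_family_on_def, intro ballI impI)
  fix i j :: nat assume "i \<noteq> j"
  show "(\<lambda>y. y + real i) -` A i \<inter> {..<0} \<inter> ((\<lambda>y. y + real j) -` A j \<inter> {..<0}) = {}"
  proof (rule ccontr)
    assume "\<not> ?thesis"
    then obtain y where "y + real i \<in> A i" "y + real j \<in> A j" by blast
    then have h: "0 \<le> y + real i" "y + real i < 1" "0 \<le> y + real j" "y + real j < 1"
      using assms[of i] assms[of j] by auto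
    show False
    proof (cases "i < j")
      case True
      then have "real i + 1 \<le> real j" by simp
      then show False using h by linarith
    next
      case False
      then have "j < i" using \<open>i \<noteq> j\<close> by simp
      then have "real j + 1 \<le> real i" by simp
      then show False using h by linarith
    qed
  qed
qed

lemma neg_decomp:
  fixes S :: "real set"
  shows "S \<inter> {..<0} = (\<Union>j. (\<lambda>y. y + real j) -` {a \<in> {0..<1}. a - real j \<in> S} \<inter> {..<0})"
proof
  show "S \<inter> {..<0} \<subseteq> (\<Union>j. (\<lambda>y. y + real j) -` {a \<in> {0..<1}. a - real j \<in> S} \<inter> {..<0})"
  proof
    fix y assume y: "y \<in> S \<inter> {..<0}"
    define j where "j = nat (- floor y)"
    have fl: "floor y < 0" using y by simp
    have jr: "real j = - of_int (floor y)" using fl by (simp add: j_def)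
    have h: "of_int (floor y) \<le> y" "y < of_int (floor y) + 1" by linarith+
    have "0 \<le> y + real j" "y + real j < 1" using h jr by linarith+
    then have "y + real j \<in> {0..<1}" by simp
    moreover have "y + real j - real j \<in> S" using y by simp
    ultimately show "y \<in> (\<Union>j. (\<lambda>y. y + real j) -` {a \<in> {0..<1}. a - real j \<in> S} \<inter> {..<0})"
      using y by blast
  qed
qed auto

lemma unique_main:
  fixes \<mu> \<mu>1 \<nu> :: "real measure" and c :: "nat \<Rightarrow> real"
  assumes mu: "real_prob \<mu>" and AEZ: "AE x in \<mu>. x \<in> \<int>"
    and mu1: "real_prob \<mu>1" and eq1: "eq_on_nonneg \<mu>1 \<mu>"
    and eqc: "eq_on_nonneg (\<mu>1 \<star> \<mu>1) (\<mu> \<star> \<mu>)"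
    and nu_sets: "sets \<nu> = sets borel"
    and nu_fin: "finite_measure \<nu>"
    and nu_on: "emeasure \<nu> (UNIV - {0..1}) = 0"
    and nu_mom: "\<And>n. measure \<mu> {real n} = (\<integral>t. t ^ n \<partial>\<nu>)"
    and c_supp: "\<And>n. c n \<in> msupp \<nu>"
    and c_dec: "strict_mono_on UNIV (\<lambda>n. - c n)"
    and c_pos: "\<And>n. 0 < c n" and c_lt1: "\<And>n. c n < 1"
  shows "\<mu>1 = \<mu>"
proof -
  interpret mu: prob_space \<mu> using mu by (simp add: real_prob_def)
  interpret mu1: prob_space \<mu>1 using mu1 by (simp add: real_prob_def)
  have smu: "sets \<mu> = sets borel" and smu1: "sets \<mu>1 = sets borel"
    using mu mu1 by (auto simp: real_prob_def)
  have Dzero: "measure \<mu>1 ((\<lambda>y. y + real j) -` A \<inter> {..<0}) = measure \<mu> ((\<lambda>y. y + real j) -` A \<inter> {..<0})"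
    if A: "A \<in> sets borel" and A01: "A \<subseteq> {0..<1}" for A j
  proof -
    define E where "E j = (\<lambda>y. y + real j) -` A \<inter> {..<0}" for j
    define D where "D j = measure \<mu>1 (E j) - measure \<mu> (E j)" for j
    have Es: "E j \<in> sets borel" for j
    proof -
      have "(\<lambda>y. y + real j) -` A \<in> sets borel"
        by (rule measurable_sets_borel[OF _ A]) measurable
      then show ?thesis unfolding E_def by auto
    qed
    have dE: "disjoint_family E" unfolding E_def by (rule shift_disjoint) (use A01 in auto)
    have s1: "summable (\<lambda>j. measure \<mu>1 (E j))"
      by (rule sums_summable[OF mu1.finite_measure_UNION]) (use Es smu1 dE in auto)
    have s0: "summable (\<lambda>j. measure \<mu> (E j))"
      by (rule sums_summable[OF mu.finite_measure_UNION]) (use Es smu dE in auto)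
    have sD: "summable (\<lambda>j. \<bar>D j\<bar>)"
    proof (rule summable_comparison_test'[OF summable_add[OF s1 s0], of 0])
      fix j
      have "0 \<le> measure \<mu>1 (E j)" "0 \<le> measure \<mu> (E j)" by simp_all
      then show "norm \<bar>D j\<bar> \<le> measure \<mu>1 (E j) + measure \<mu> (E j)"
        unfolding D_def real_norm_def by arith
    qed
    have mom: "(\<Sum>j. D j * (\<integral>t. t ^ (m + j) \<partial>\<nu>)) = 0" for m
    proof -
      have "(\<Sum>j. measure \<mu> {real (j + m)} * D j) = 0"
        using series_eq[OF mu AEZ mu1 eq1 eqc A A01, of m] unfolding D_def E_def .
      moreover have "measure \<mu> {real (j + m)} * D j = D j * (\<integral>t. t ^ (m + j) \<partial>\<nu>)" for j
        using nu_mom[of "j + m"] by (simp add: add.commute mult.commute)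
      ultimately show ?thesis by (metis (no_types, lifting) suminf_cong)
    qed
    have zc: "(\<Sum>j. D j * c n ^ j) = 0" for n
      by (rule moments_zero_imp[OF nu_sets nu_fin nu_on sD mom c_supp])
         (use c_pos[of n] c_lt1[of n] in auto)
    have z01: "(\<Sum>j. D j * x ^ j) = 0" if "0 < x" "x < 1" for x
      by (rule powser_zero_on_01[OF sD c_dec c_pos c_lt1 zc that])
    have "D j = 0" by (rule coeffs_zero[OF sD zero_less_one z01])
    then show ?thesis by (simp add: D_def E_def)
  qed
  show ?thesis
  proof (rule measure_eqI)
    show "sets \<mu>1 = sets \<mu>" using smu smu1 by simp
    fix S assume "S \<in> sets \<mu>1"
    then have S: "S \<in> sets borel" using smu1 by simp
    define P where "P j = (\<lambda>y. y + real j) -` {a \<in> {0..<1}. a - real j \<in> S} \<inter> {..<0::real}" for j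
    have Pb: "P j \<in> sets borel" for j
    proof -
      have "{a \<in> {0..<1::real}. a - real j \<in> S} = {0..<1} \<inter> (\<lambda>a. a - real j) -` S" by auto
      moreover have "(\<lambda>a. a - real j) -` S \<in> sets borel"
        by (rule measurable_sets_borel[OF _ S]) measurable
      ultimately have Ab: "{a \<in> {0..<1::real}. a - real j \<in> S} \<in> sets borel" by auto
      have "(\<lambda>y. y + real j) -` {a \<in> {0..<1::real}. a - real j \<in> S} \<in> sets borel"
        by (rule measurable_sets_borel[OF _ Ab]) measurable
      then show ?thesis unfolding P_def by auto
    qed
    have dP: "disjoint_family P" unfolding P_def by (rule shift_disjoint) auto
    have Pe: "emeasure \<mu>1 (P j) = emeasure \<mu> (P j)" for j
    proof -
      have Ab: "{a \<in> {0..<1::real}. a - real j \<in> S} \<in> sets borel"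
      proof -
        have "{a \<in> {0..<1::real}. a - real j \<in> S} = {0..<1} \<inter> (\<lambda>a. a - real j) -` S" by auto
        moreover have "(\<lambda>a. a - real j) -` S \<in> sets borel"
          by (rule measurable_sets_borel[OF _ S]) measurable
        ultimately show ?thesis by auto
      qed
      have "measure \<mu>1 (P j) = measure \<mu> (P j)" unfolding P_def by (rule Dzero[OF Ab]) auto
      then show ?thesis by (simp add: mu1.emeasure_eq_measure mu.emeasure_eq_measure)
    qed
    have neg: "emeasure \<mu>1 (S \<inter> {..<0}) = emeasure \<mu> (S \<inter> {..<0})"
    proof -
      have eqS: "S \<inter> {..<0} = (\<Union>j. P j)" unfolding P_def by (rule neg_decomp)
      have "emeasure \<mu>1 (\<Union>j. P j) = (\<Sum>j. emeasure \<mu>1 (P j))"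
        by (rule suminf_emeasure[symmetric]) (use Pb smu1 dP in auto)
      also have "\<dots> = (\<Sum>j. emeasure \<mu> (P j))" by (simp add: Pe)
      also have "\<dots> = emeasure \<mu> (\<Union>j. P j)"
        by (rule suminf_emeasure) (use Pb smu dP in auto)
      finally show ?thesis using eqS by simp
    qed
    have pos: "emeasure \<mu>1 (S \<inter> {0..}) = emeasure \<mu> (S \<inter> {0..})"
      using eq1 S unfolding eq_on_nonneg_def by auto
    have split: "emeasure M S = emeasure M (S \<inter> {0..}) + emeasure M (S \<inter> {..<0})"
      if "sets M = sets borel" for M :: "real measure"
    proof -
      have "S = (S \<inter> {0..}) \<union> (S \<inter> {..<0})" by auto
      moreover have "emeasure M (S \<inter> {0..}) + emeasure M (S \<inter> {..<0}) = emeasure M ((S \<inter> {0..}) \<union> (S \<inter> {..<0}))"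
        by (rule plus_emeasure) (use S that in auto)
      ultimately show ?thesis by simp
    qed
    show "emeasure \<mu>1 S = emeasure \<mu> S"
      using split[OF smu1] split[OF smu] pos neg by simp
  qed
qed


theorem theorem3p12:
  fixes \<mu> \<nu> :: "real measure" and c :: "nat \<Rightarrow> real"
  assumes mu: "real_prob \<mu>"
    and supp: "\<not> msupp \<mu> \<subseteq> {..<0}"
    and cm: "completely_monotone (\<lambda>n. measure \<mu> {real n})"
    and nu_sets: "sets \<nu> = sets borel"
    and nu_fin: "finite_measure \<nu>"
    and nu_on: "emeasure \<nu> (UNIV - {0..1}) = 0"
    and nu_mom: "\<And>n. measure \<mu> {real n} = (\<integral>t. t ^ n \<partial>\<nu>)"
    and c_supp: "\<And>n. c n \<in> msupp \<nu>"
    and c_dec: "strict_mono_on UNIV (\<lambda>n. - c n)"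
    and c_pos: "\<And>n. 0 < c n" and c_lt1: "\<And>n. c n < 1"
    and c_div: "\<not> summable (\<lambda>n. 1 / (- ln (c n)))"
  shows "(\<forall>\<mu>1. real_prob \<mu>1 \<and> eq_on_nonneg \<mu>1 \<mu> \<and> eq_on_nonneg (convolution \<mu>1 \<mu>1) (convolution \<mu> \<mu>)
            \<longrightarrow> (msupp \<mu>1 \<subseteq> \<int> \<longleftrightarrow> msupp \<mu> \<subseteq> \<int>))
       \<and> (msupp \<mu> \<subseteq> \<int> \<longrightarrow>
            (\<forall>\<mu>1. real_prob \<mu>1 \<and> eq_on_nonneg \<mu>1 \<mu> \<and> eq_on_nonneg (convolution \<mu>1 \<mu>1) (convolution \<mu> \<mu>)
               \<longrightarrow> \<mu>1 = \<mu>)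
            \<and> \<mu> \<in> classC)"
  proof -
  have AEof: "AE x in M. x \<in> \<int>" if "real_prob M" "msupp M \<subseteq> \<int>" for M
    using supp_AE[OF that(1)] that(2) by (auto elim!: AE_mp)
  have sym: "eq_on_nonneg N M" if "eq_on_nonneg M N" for M N
    using that by (simp add: eq_on_nonneg_def)
  have U: "\<mu>1 = \<mu>" if h: "real_prob \<mu>1" "eq_on_nonneg \<mu>1 \<mu>" "eq_on_nonneg (\<mu>1 \<star> \<mu>1) (\<mu> \<star> \<mu>)"
    and z: "msupp \<mu> \<subseteq> \<int>" for \<mu>1
    by (rule unique_main[OF mu AEof[OF mu z] h nu_sets nu_fin nu_on nu_mom c_supp c_dec c_pos c_lt1])
  have part1: "msupp \<mu>1 \<subseteq> \<int> \<longleftrightarrow> msupp \<mu> \<subseteq> \<int>"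
    if h: "real_prob \<mu>1" "eq_on_nonneg \<mu>1 \<mu>" "eq_on_nonneg (\<mu>1 \<star> \<mu>1) (\<mu> \<star> \<mu>)" for \<mu>1
  proof
    assume z1: "msupp \<mu>1 \<subseteq> \<int>"
    have mom1: "measure \<mu>1 {real n} = (\<integral>t. t ^ n \<partial>\<nu>)" for n
    proof -
      have "emeasure \<mu>1 {real n} = emeasure \<mu> {real n}"
        using h(2) unfolding eq_on_nonneg_def by auto
      then have "measure \<mu>1 {real n} = measure \<mu> {real n}" by (simp add: measure_def)
      then show ?thesis using nu_mom[of n] by simp
    qed
    have "\<mu> = \<mu>1"
      by (rule unique_main[OF h(1) AEof[OF h(1) z1] mu sym[OF h(2)] sym[OF h(3)] nu_sets nu_fin nu_on
            mom1 c_supp c_dec c_pos c_lt1])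
    then show "msupp \<mu> \<subseteq> \<int>" using z1 by simp
  next
    assume z: "msupp \<mu> \<subseteq> \<int>"
    then have "\<mu>1 = \<mu>" using U h by blast
    then show "msupp \<mu>1 \<subseteq> \<int>" using z by simp
  qed
  have cp1: "conv_pow M 1 = M" for M by simp
  have cp2: "conv_pow M 2 = convolution M M" for M by (simp add: numeral_2_eq_2)
  show ?thesis
  proof (intro conjI allI impI)
    fix \<mu>1 assume "real_prob \<mu>1 \<and> eq_on_nonneg \<mu>1 \<mu> \<and> eq_on_nonneg (\<mu>1 \<star> \<mu>1) (\<mu> \<star> \<mu>)"
    then show "msupp \<mu>1 \<subseteq> \<int> \<longleftrightarrow> msupp \<mu> \<subseteq> \<int>" using part1 by blast
  next
    fix \<mu>1 assume z: "msupp \<mu> \<subseteq> \<int>"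
      and "real_prob \<mu>1 \<and> eq_on_nonneg \<mu>1 \<mu> \<and> eq_on_nonneg (\<mu>1 \<star> \<mu>1) (\<mu> \<star> \<mu>)"
    then show "\<mu>1 = \<mu>" using U by blast
  next
    assume z: "msupp \<mu> \<subseteq> \<int>"
    show "\<mu> \<in> classC"
      unfolding classC_def
    proof (intro CollectI conjI allI impI)
      show "real_prob \<mu>" by (rule mu)
      fix \<mu>1 assume h: "real_prob \<mu>1 \<and> (\<forall>n\<ge>1. eq_on_nonneg (conv_pow \<mu>1 n) (conv_pow \<mu> n))"
      then have "eq_on_nonneg (conv_pow \<mu>1 1) (conv_pow \<mu> 1)" "eq_on_nonneg (conv_pow \<mu>1 2) (conv_pow \<mu> 2)"
        by auto
      then have "eq_on_nonneg \<mu>1 \<mu>" "eq_on_nonneg (\<mu>1 \<star> \<mu>1) (\<mu> \<star> \<mu>)"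
        by (simp_all only: cp1 cp2)
      then show "\<mu>1 = \<mu>" using U h z by blast
    qed
  qed
qed

end
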